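(* If $\phi$ is a rational inner function on $\mathbb{D}^2$, then every $\tau\in\mathbb{T}^2$ is a B-point for $\phi$; that is, there exists a sequence $\{\lambda_k\}\subseteq\mathbb{D}^2$ converging to $\tau$ such that $\frac{1-|\phi(\lambda_k)|}{1-\|\lambda_k\|}$ is bounded, where $\|z\|=\max\{|z_1|,|z_2|\}$.
   Context: A rational inner function on $\mathbb{D}^2$ is a rational function $\phi=q/p$ holomorphic on $\mathbb{D}^2$ with $|\phi(\zeta)|=1$ for almost every $\zeta\in\mathbb{T}^2$. *)

theory Defs
  imports "HOL-Analysis.Analysis"
begin

definition poly2 :: "(nat \<Rightarrow> nat \<Rightarrow> complex) \<Rightarrow> nat \<Rightarrow> complex \<times> complex \<Rightarrow> complex" where
  "poly2 c N z = (\<Sum>i\<le>N. \<Sum>j\<le>N. c i j * fst z ^ i * snd z ^ j)"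

definition bidisk :: "(complex \<times> complex) set" where
  "bidisk = {z. cmod (fst z) < 1 \<and> cmod (snd z) < 1}"

definition torus2 :: "(complex \<times> complex) set" where
  "torus2 = {z. cmod (fst z) = 1 \<and> cmod (snd z) = 1}"

definition maxnorm :: "complex \<times> complex \<Rightarrow> real" where
  "maxnorm z = max (cmod (fst z)) (cmod (snd z))"

text \<open>Holomorphic on an open set of C^2: continuous and holomorphic in each variable
  separately (equivalent to joint holomorphy by Osgood/Hartogs).\<close>
definition holomorphic2_on :: "(complex \<times> complex \<Rightarrow> complex) \<Rightarrow> (complex \<times> complex) set \<Rightarrow> bool" where
  "holomorphic2_on f S \<longleftrightarrow> continuous_on S f \<and>
     (\<forall>z\<in>S. (\<lambda>w. f (w, snd z)) holomorphic_on {w. (w, snd z) \<in> S}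
          \<and> (\<lambda>w. f (fst z, w)) holomorphic_on {w. (fst z, w) \<in> S})"

definition rational_inner :: "(complex \<times> complex \<Rightarrow> complex) \<Rightarrow> bool" where
  "rational_inner \<phi> \<longleftrightarrow>
     (\<exists>p q N. (\<exists>i\<le>N. \<exists>j\<le>N. p i j \<noteq> 0) \<and>
        (\<forall>z\<in>bidisk. poly2 p N z \<noteq> 0 \<longrightarrow> \<phi> z = poly2 q N z / poly2 p N z) \<and>
        holomorphic2_on \<phi> bidisk \<and>
        (AE x in lborel. x \<in> {0..2*pi} \<times> {0..2*pi} \<longrightarrow>
           (let \<zeta> = (cis (fst x), cis (snd x)) in
              poly2 p N \<zeta> \<noteq> 0 \<and> cmod (poly2 q N \<zeta> / poly2 p N \<zeta>) = 1)))"

end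

theory Submission imports Defs "HOL-Computational_Algebra.Polynomial" begin

lemma circ_lim:
  fixes f g :: "complex \<Rightarrow> real"
  assumes "isCont f 1" "isCont g 1" "\<And>z. cmod z = 1 \<Longrightarrow> z \<noteq> 1 \<Longrightarrow> f z = g z"
  shows "f 1 = g 1"
proof -
  define zs where "zs n = cis (1 / real (Suc n))" for n
  have t: "(\<lambda>n. 1 / real (Suc n)) \<longlonglongrightarrow> 0"
    using LIMSEQ_inverse_real_of_nat by (simp add: inverse_eq_divide)
  have "zs \<longlonglongrightarrow> cis 0"
    unfolding zs_def by (intro tendsto_intros t)
  hence zl: "zs \<longlonglongrightarrow> 1" by simp
  have ne: "zs n \<noteq> 1" for n
  proof
    assume "zs n = 1"
    hence "Im (zs n) = 0" by simp
    hence "sin (1 / real (Suc n)) = 0" unfolding zs_def by simp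
    moreover have "sin (1 / real (Suc n)) > 0"
    proof (rule sin_gt_zero)
      have "pi \<le> pi * (1 + real n)" by simp
      hence "1 < pi * (1 + real n)" using pi_gt3 by linarith
      thus "1 / real (Suc n) < pi" by (simp add: divide_simps)
    qed simp
    ultimately show False by simp
  qed
  have n1: "cmod (zs n) = 1" for n unfolding zs_def by simp
  have "(\<lambda>n. f (zs n)) \<longlonglongrightarrow> f 1" by (rule isCont_tendsto_compose[OF assms(1) zl])
  moreover have "(\<lambda>n. g (zs n)) \<longlonglongrightarrow> g 1" by (rule isCont_tendsto_compose[OF assms(2) zl])
  moreover have "(\<lambda>n. f (zs n)) = (\<lambda>n. g (zs n))" using assms(3) ne n1 by auto
  ultimately show ?thesis using LIMSEQ_unique by metis
qed

lemma torus_eq: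
  assumes AE: "AE x in lborel. x \<in> {0..2*pi} \<times> {0..2*pi} \<longrightarrow>
           (let \<zeta> = (cis (fst x), cis (snd x)) in
              poly2 p N \<zeta> \<noteq> 0 \<and> cmod (poly2 q N \<zeta> / poly2 p N \<zeta>) = 1)"
    and z: "\<zeta> \<in> torus2"
  shows "cmod (poly2 q N \<zeta>) = cmod (poly2 p N \<zeta>)"
proof -
  define h where "h x = cmod (poly2 q N (cis (fst x), cis (snd x))) - cmod (poly2 p N (cis (fst x), cis (snd x)))" for x :: "real \<times> real"
  have ch: "continuous_on UNIV h"
    unfolding h_def poly2_def by (intro continuous_intros)
  have cl: "closed {x. h x = 0}"
    using closed_Collect_eq[OF ch continuous_on_const] .
  define S :: "(real \<times> real) set" where "S = {0<..<2*pi} \<times> {0<..<2*pi}"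
  have oS: "open S" unfolding S_def by (intro open_Times) auto
  have "AE x in lborel. x \<in> S \<longrightarrow> x \<in> {x. h x = 0}"
  proof (rule eventually_mono[OF AE])
    fix x assume H: "x \<in> {0..2*pi} \<times> {0..2*pi} \<longrightarrow>
           (let \<zeta> = (cis (fst x), cis (snd x)) in
              poly2 p N \<zeta> \<noteq> 0 \<and> cmod (poly2 q N \<zeta> / poly2 p N \<zeta>) = 1)"
    show "x \<in> S \<longrightarrow> x \<in> {x. h x = 0}"
    proof
      assume "x \<in> S"
      hence "x \<in> {0..2*pi} \<times> {0..2*pi}" unfolding S_def by (auto simp: mem_Times_iff)
      with H have "poly2 p N (cis (fst x), cis (snd x)) \<noteq> 0"
        "cmod (poly2 q N (cis (fst x), cis (snd x)) / poly2 p N (cis (fst x), cis (snd x))) = 1"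
        by (auto simp: Let_def)
      thus "x \<in> {x. h x = 0}" unfolding h_def by (simp add: norm_divide divide_eq_1_iff)
    qed
  qed
  hence AE2: "AE x\<in>S in lebesgue. x \<in> {x. h x = 0}" by (rule AE_completion)
  have "S \<subseteq> {x. h x = 0}"
    using mem_closed_if_AE_lebesgue_open[OF oS cl AE2] by blast
  hence "closure S \<subseteq> {x. h x = 0}" using cl by (rule closure_minimal)
  moreover have "closure S = {0..2*pi} \<times> {0..2*pi}"
    unfolding S_def closure_Times by (simp add: closure_greaterThanLessThan)
  ultimately have H0: "h x = 0" if "x \<in> {0..2*pi} \<times> {0..2*pi}" for x using that by blast
  define a where "a = Arg2pi (fst \<zeta>)"
  define b where "b = Arg2pi (snd \<zeta>)"
  have "fst \<zeta> = cis a" using Arg2pi_eq[of "fst \<zeta>"] z unfolding a_def torus2_def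
    by (simp add: cis_conv_exp)
  moreover have "snd \<zeta> = cis b" using Arg2pi_eq[of "snd \<zeta>"] z unfolding b_def torus2_def
    by (simp add: cis_conv_exp)
  moreover have "(a,b) \<in> {0..2*pi} \<times> {0..2*pi}"
    unfolding a_def b_def using Arg2pi_ge_0 Arg2pi_lt_2pi by (auto simp: less_imp_le)
  ultimately show ?thesis using H0[of "(a,b)"] unfolding h_def
    by (metis (no_types) eq_iff_diff_eq_0 fst_conv prod.collapse snd_conv)
qed

lemma decomp1:
  fixes P :: "complex poly"
  assumes "P \<noteq> 0"
  obtains P' where "P = [:-1,1:]^order 1 P * P'" "poly P' 1 \<noteq> 0"
  using order_decomp[OF assms, of 1] poly_eq_0_iff_dvd by metis

lemma radial_est:
  fixes P Q :: "complex poly"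
  assumes P0: "P \<noteq> 0" and circ: "\<And>z. cmod z = 1 \<Longrightarrow> cmod (poly Q z) = cmod (poly P z)"
  shows "\<exists>\<delta>>0. \<exists>C. \<forall>r::real. 1-\<delta> < r \<and> r < 1 \<longrightarrow> poly P (of_real r) \<noteq> 0 \<and>
            \<bar>1 - cmod (poly Q (of_real r) / poly P (of_real r))\<bar> \<le> C*(1-r)"
proof -
  obtain P' where P': "P = [:-1,1:]^order 1 P * P'" "poly P' 1 \<noteq> 0" using decomp1[OF P0] by blast
  define b where "b = order 1 P"
  have pP: "poly P z = (z - 1)^b * poly P' z" for z
  proof -
    have "poly P z = poly ([:-1,1:]^b * P') z" using P'(1) unfolding b_def by metis
    thus ?thesis by (simp add: poly_power)
  qed
  have Q0: "Q \<noteq> 0"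
  proof
    assume "Q = 0"
    have "cmod (poly P' 1) = 0"
    proof (rule circ_lim[where g = "\<lambda>_. 0"])
      fix z :: complex assume "cmod z = 1" "z \<noteq> 1"
      with circ[of z] \<open>Q = 0\<close> show "cmod (poly P' z) = 0" by (simp add: pP)
    qed (auto intro!: continuous_intros poly_isCont)
    with P'(2) show False by simp
  qed
  obtain Q' where Q': "Q = [:-1,1:]^order 1 Q * Q'" "poly Q' 1 \<noteq> 0" using decomp1[OF Q0] by blast
  define a where "a = order 1 Q"
  have pQ: "poly Q z = (z - 1)^a * poly Q' z" for z
  proof -
    have "poly Q z = poly ([:-1,1:]^a * Q') z" using Q'(1) unfolding a_def by metis
    thus ?thesis by (simp add: poly_power)
  qed
  have eq: "cmod (z-1)^a * cmod (poly Q' z) = cmod (z-1)^b * cmod (poly P' z)" if "cmod z = 1" for z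
    using circ[OF that] by (simp add: pP pQ norm_mult norm_power)
  have ab: "a = b"
  proof (rule ccontr)
    assume "a \<noteq> b"
    then consider "a < b" | "b < a" by linarith
    thus False
    proof cases
      case 1
      have "cmod (poly Q' 1) = cmod (1 - 1)^(b-a) * cmod (poly P' 1)"
      proof (rule circ_lim[where f = "\<lambda>z. cmod (poly Q' z)" and g = "\<lambda>z. cmod (z-1)^(b-a) * cmod (poly P' z)"])
        fix z :: complex assume z: "cmod z = 1" "z \<noteq> 1"
        have pos: "cmod (z-1) > 0" using z by simp
        have "cmod (z-1)^b = cmod (z-1)^a * cmod (z-1)^(b-a)"
          using 1 by (simp flip: power_add)
        with eq[OF z(1)] pos show "cmod (poly Q' z) = cmod (z-1)^(b-a) * cmod (poly P' z)"
          by (simp add: mult.assoc)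
      qed (auto intro!: continuous_intros poly_isCont)
      with 1 Q'(2) show False by (simp add: power_0_left)
    next
      case 2
      have "cmod (poly P' 1) = cmod (1 - 1)^(a-b) * cmod (poly Q' 1)"
      proof (rule circ_lim[where f = "\<lambda>z. cmod (poly P' z)" and g = "\<lambda>z. cmod (z-1)^(a-b) * cmod (poly Q' z)"])
        fix z :: complex assume z: "cmod z = 1" "z \<noteq> 1"
        have pos: "cmod (z-1) > 0" using z by simp
        have "cmod (z-1)^a = cmod (z-1)^b * cmod (z-1)^(a-b)"
          using 2 by (simp flip: power_add)
        with eq[OF z(1)] pos show "cmod (poly P' z) = cmod (z-1)^(a-b) * cmod (poly Q' z)"
          by (simp add: mult.assoc)
      qed (auto intro!: continuous_intros poly_isCont)
      with 2 P'(2) show False by (simp add: power_0_left)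
    qed
  qed
  have m1: "cmod (poly Q' 1) = cmod (poly P' 1)"
  proof (rule circ_lim[where f = "\<lambda>z. cmod (poly Q' z)" and g = "\<lambda>z. cmod (poly P' z)"])
    fix z :: complex assume z: "cmod z = 1" "z \<noteq> 1"
    have pos: "cmod (z-1) > 0" using z by simp
    with eq[OF z(1)] ab show "cmod (poly Q' z) = cmod (poly P' z)" by simp
  qed (auto intro!: continuous_intros poly_isCont)
  define R where "R = smult (poly P' 1) Q' - smult (poly Q' 1) P'"
  have "poly R 1 = 0" unfolding R_def by simp
  then obtain S where S: "R = [:-1,1:] * S" using poly_eq_0_iff_dvd by (metis dvdE)
  have pR: "poly R z = (z - 1) * poly S z" for z by (simp only: S poly_mult) (simp add: algebra_simps)
  define c where "c = cmod (poly P' 1)"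
  have c0: "c > 0" using P'(2) unfolding c_def by simp
  obtain d1 where d1: "d1 > 0" "\<And>z. dist z 1 < d1 \<Longrightarrow> dist (poly P' z) (poly P' 1) < c/2"
    using poly_isCont[of 1 P'] c0 unfolding continuous_at_eps_delta by (meson half_gt_zero)
  obtain d2 where d2: "d2 > 0" "\<And>z. dist z 1 < d2 \<Longrightarrow> dist (poly S z) (poly S 1) < 1"
    using poly_isCont[of 1 S] unfolding continuous_at_eps_delta by (meson zero_less_one)
  define C where "C = (cmod (poly S 1) + 1) / (c/2 * c)"
  show ?thesis
  proof (rule exI[of _ "min d1 d2"], intro conjI exI[of _ C] allI impI)
    show "min d1 d2 > 0" using d1 d2 by simp
    fix r :: real assume r: "1 - min d1 d2 < r \<and> r < 1"
    define z where "z = complex_of_real r"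
    have dz: "dist z 1 = 1 - r" unfolding z_def dist_norm using r
      by (metis abs_of_pos diff_gt_0_iff_gt minus_diff_eq norm_minus_commute norm_of_real of_real_1 of_real_diff)
    have z1: "z - 1 \<noteq> 0" using r unfolding z_def by (metis eq_iff_diff_eq_0 of_real_eq_1_iff order_less_irrefl)
    have r1: "1 - r < d1" "1 - r < d2" using r by auto
    have nz: "cmod (z - 1) = 1 - r" using dz by (simp add: dist_norm)
    have "cmod (poly P' z - poly P' 1) < c/2" using d1(2)[of z] dz r1 by (simp add: dist_norm)
    hence P'z: "cmod (poly P' z) > c/2" unfolding c_def using norm_triangle_ineq2[of "poly P' 1" "poly P' z"]
      by (simp add: norm_minus_commute)
    have "cmod (poly S z - poly S 1) < 1" using d2(2)[of z] dz r1 by (simp add: dist_norm)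
    hence Sz: "cmod (poly S z) \<le> cmod (poly S 1) + 1" using norm_triangle_ineq2[of "poly S z" "poly S 1"] by linarith
    have P'z0: "poly P' z \<noteq> 0" using P'z c0 by auto
    show "poly P (of_real r) \<noteq> 0" using P'z0 z1 by (simp add: pP z_def[symmetric])
    have qp: "poly Q z / poly P z = poly Q' z / poly P' z" using z1 P'z0 ab by (simp add: pP pQ)
    have diff: "poly Q' z / poly P' z - poly Q' 1 / poly P' 1 = (z - 1) * poly S z / (poly P' z * poly P' 1)"
      using P'z0 P'(2) by (simp add: pR[symmetric] R_def field_simps)
    have g1: "cmod (poly Q' 1 / poly P' 1) = 1" using m1 P'(2) by (simp add: norm_divide)
    have "\<bar>1 - cmod (poly Q z / poly P z)\<bar> = \<bar>cmod (poly Q' 1 / poly P' 1) - cmod (poly Q' z / poly P' z)\<bar>"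
      using g1 qp by simp
    also have "\<dots> \<le> cmod (poly Q' z / poly P' z - poly Q' 1 / poly P' 1)"
      by (metis norm_minus_commute norm_triangle_ineq3)
    also have "\<dots> = (1 - r) * cmod (poly S z) / (cmod (poly P' z) * c)"
      by (simp add: diff norm_mult norm_divide nz c_def)
    also have "\<dots> \<le> (1 - r) * (cmod (poly S 1) + 1) / (c/2 * c)"
    proof (rule frac_le)
      show "0 \<le> (1 - r) * (cmod (poly S 1) + 1)" using r by simp
      show "(1 - r) * cmod (poly S z) \<le> (1 - r) * (cmod (poly S 1) + 1)"
        using r Sz by (intro mult_left_mono) auto
      show "0 < c / 2 * c" using c0 by simp
      show "c / 2 * c \<le> cmod (poly P' z) * c" using P'z c0 by (intro mult_right_mono) auto
    qed
    also have "\<dots> = C * (1 - r)" unfolding C_def by simp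
    finally show "\<bar>1 - cmod (poly Q (of_real r) / poly P (of_real r))\<bar> \<le> C * (1 - r)"
      by (simp add: z_def)
  qed
qed

lemma idx_inj:
  fixes N i j i0 j0 :: nat
  assumes "i \<le> N" "i0 \<le> N" "i + Suc N * j = i0 + Suc N * j0"
  shows "i = i0 \<and> j = j0"
proof -
  have "(i + Suc N * j) mod Suc N = i" using assms(1) by (metis mod_mult_self2 mod_less le_imp_less_Suc)
  moreover have "(i0 + Suc N * j0) mod Suc N = i0" using assms(2) by (metis mod_mult_self2 mod_less le_imp_less_Suc)
  ultimately have ii: "i = i0" using assms(3) by simp
  with assms(3) have "Suc N * j = Suc N * j0" by simp
  hence "j = j0" by (metis mult_left_cancel Suc_neq_Zero)
  with ii show ?thesis by simp
qed

lemma PP_coeff: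
  fixes f :: "nat \<Rightarrow> nat \<Rightarrow> complex"
  assumes "i0 \<le> N" "j0 \<le> N"
  shows "coeff (\<Sum>i\<le>N. \<Sum>j\<le>N. monom (f i j) (i + Suc N * j)) (i0 + Suc N * j0) = f i0 j0"
proof -
  have "coeff (\<Sum>i\<le>N. \<Sum>j\<le>N. monom (f i j) (i + Suc N * j)) (i0 + Suc N * j0)
      = (\<Sum>i\<le>N. \<Sum>j\<le>N. if i + Suc N * j = i0 + Suc N * j0 then f i j else 0)"
    by (simp add: coeff_sum coeff_monom)
  also have "\<dots> = (\<Sum>i\<le>N. \<Sum>j\<le>N. if i = i0 \<and> j = j0 then f i j else 0)"
  proof (intro sum.cong refl)
    fix i j assume ij: "i \<in> {..N}" "j \<in> {..N}"
    have "(i + Suc N * j = i0 + Suc N * j0) = (i = i0 \<and> j = j0)"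
      using idx_inj[of i N i0 j j0] ij assms by auto
    thus "(if i + Suc N * j = i0 + Suc N * j0 then f i j else 0) = (if i = i0 \<and> j = j0 then f i j else 0)"
      by simp
  qed
  also have "\<dots> = (\<Sum>i\<le>N. if i = i0 then f i j0 else 0)"
    by (intro sum.cong refl) (use assms in auto)
  also have "\<dots> = f i0 j0" using assms by simp
  finally show ?thesis .
qed

theorem lemma2p1:
  fixes \<phi> :: "complex \<times> complex \<Rightarrow> complex" and \<tau> :: "complex \<times> complex"
  assumes "rational_inner \<phi>" and "\<tau> \<in> torus2"
  shows "\<exists>lam :: nat \<Rightarrow> complex \<times> complex. (\<forall>k. lam k \<in> bidisk) \<and> lam \<longlonglongrightarrow> \<tau> \<and>
           bounded (range (\<lambda>k. (1 - cmod (\<phi> (lam k))) / (1 - maxnorm (lam k))))"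
proof -
  obtain p q N where pnz: "\<exists>i\<le>N. \<exists>j\<le>N. p i j \<noteq> 0"
    and eqb: "\<forall>z\<in>bidisk. poly2 p N z \<noteq> 0 \<longrightarrow> \<phi> z = poly2 q N z / poly2 p N z"
    and AE: "AE x in lborel. x \<in> {0..2*pi} \<times> {0..2*pi} \<longrightarrow>
           (let \<zeta> = (cis (fst x), cis (snd x)) in
              poly2 p N \<zeta> \<noteq> 0 \<and> cmod (poly2 q N \<zeta> / poly2 p N \<zeta>) = 1)"
    using assms(1) unfolding rational_inner_def by blast
  define m where "m = Suc N"
  define t1 where "t1 = fst \<tau>"
  define t2 where "t2 = snd \<tau>"
  have t1: "cmod t1 = 1" and t2: "cmod t2 = 1" using assms(2) unfolding torus2_def t1_def t2_def by auto
  define PP where "PP c = (\<Sum>i\<le>N. \<Sum>j\<le>N. monom (c i j * t1^i * t2^j) (i + m*j))" for c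
  define \<gamma> where "\<gamma> z = (z * t1, z^m * t2)" for z :: complex
  have pPP: "poly (PP c) z = poly2 c N (\<gamma> z)" for c z
    unfolding PP_def poly2_def \<gamma>_def poly_sum poly_monom
    by (intro sum.cong refl) (simp add: power_add power_mult power_mult_distrib mult_ac; simp add: power_mult[symmetric] mult.commute)
  have PP0: "PP p \<noteq> 0"
  proof
    assume H: "PP p = 0"
    obtain i0 j0 where ij: "i0 \<le> N" "j0 \<le> N" "p i0 j0 \<noteq> 0" using pnz by blast
    have "coeff (PP p) (i0 + Suc N * j0) = p i0 j0 * t1^i0 * t2^j0"
      unfolding PP_def m_def by (rule PP_coeff[OF ij(1,2)])
    moreover have "t1 \<noteq> 0" "t2 \<noteq> 0" using t1 t2 by auto
    ultimately show False using H ij(3) by simp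
  qed
  have circ: "cmod (poly (PP q) z) = cmod (poly (PP p) z)" if "cmod z = 1" for z
  proof -
    have "\<gamma> z \<in> torus2" unfolding torus2_def \<gamma>_def using that t1 t2 by (simp add: norm_mult norm_power)
    thus ?thesis unfolding pPP by (rule torus_eq[OF AE])
  qed
  obtain \<delta> C where \<delta>: "\<delta> > 0" and est: "\<And>r::real. 1-\<delta> < r \<Longrightarrow> r < 1 \<Longrightarrow> poly (PP p) (of_real r) \<noteq> 0 \<and>
            \<bar>1 - cmod (poly (PP q) (of_real r) / poly (PP p) (of_real r))\<bar> \<le> C*(1-r)"
    using radial_est[OF PP0 circ] by blast
  define d where "d = min \<delta> 1"
  have d: "0 < d" "d \<le> \<delta>" "d \<le> 1" using \<delta> unfolding d_def by auto
  define r where "r k = 1 - d / (real k + 2)" for k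
  have r0: "0 < r k" and r1: "r k < 1" and r\<delta>: "1 - \<delta> < r k" for k
  proof -
    have a: "d / (real k + 2) \<le> d / 2" using d by (intro divide_left_mono) auto
    have b: "d / (real k + 2) > 0" using d by simp
    have c: "d / 2 < d" using d by simp
    show "0 < r k" unfolding r_def using a d by linarith
    show "r k < 1" unfolding r_def using b by linarith
    show "1 - \<delta> < r k" unfolding r_def using a c d by linarith
  qed
  define lam where "lam k = \<gamma> (of_real (r k))" for k
  have nr: "cmod (of_real (r k) :: complex) = r k" for k using r0[of k] by simp
  have rm1: "r k ^ m \<le> r k" for k
  proof -
    have "r k ^ N \<le> 1" using r0[of k] r1[of k] by (intro power_le_one) auto
    hence "r k * r k ^ N \<le> r k * 1" using r0[of k] by (intro mult_left_mono) auto
    thus ?thesis unfolding m_def by simp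
  qed
  have rm: "r k ^ m \<le> r k" "r k ^ m < 1" for k using rm1[of k] r1[of k] by auto
  have inb: "lam k \<in> bidisk" for k
    unfolding lam_def \<gamma>_def bidisk_def using t1 t2 nr r1 rm by (simp add: norm_mult norm_power)
  have mx: "maxnorm (lam k) = r k" for k
    unfolding lam_def \<gamma>_def maxnorm_def using t1 t2 nr[of k] rm1[of k] by (auto simp: norm_mult norm_power max_def)
  have rlim: "r \<longlonglongrightarrow> 1"
  proof -
    have "(\<lambda>k. d / real (k + 2)) \<longlonglongrightarrow> 0"
      by (rule LIMSEQ_ignore_initial_segment[OF lim_const_over_n[of d]])
    hence "(\<lambda>k. d / (real k + 2)) \<longlonglongrightarrow> 0" by (simp add: add.commute)
    from tendsto_diff[OF tendsto_const[of 1] this] show ?thesis unfolding r_def by simp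
  qed
  have llim: "lam \<longlonglongrightarrow> \<tau>"
  proof -
    have "(\<lambda>k. \<gamma> (of_real (r k))) \<longlonglongrightarrow> \<gamma> (of_real 1)"
      unfolding \<gamma>_def by (intro tendsto_intros rlim)
    moreover have "\<gamma> (of_real 1) = \<tau>" unfolding \<gamma>_def t1_def t2_def by simp
    ultimately show ?thesis unfolding lam_def by simp
  qed
  have bnd: "norm ((1 - cmod (\<phi> (lam k))) / (1 - maxnorm (lam k))) \<le> \<bar>C\<bar>" for k
  proof -
    from est[OF r\<delta>[of k] r1[of k]] have e1: "poly (PP p) (of_real (r k)) \<noteq> 0"
      and e2: "\<bar>1 - cmod (poly (PP q) (of_real (r k)) / poly (PP p) (of_real (r k)))\<bar> \<le> C*(1 - r k)" by auto
    have "\<phi> (lam k) = poly (PP q) (of_real (r k)) / poly (PP p) (of_real (r k))"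
    proof -
      have e1': "poly2 p N (lam k) \<noteq> 0" using e1 unfolding pPP lam_def .
      have "\<phi> (lam k) = poly2 q N (lam k) / poly2 p N (lam k)" using eqb inb[of k] e1' by blast
      thus ?thesis by (simp add: pPP lam_def)
    qed
    hence "norm ((1 - cmod (\<phi> (lam k))) / (1 - maxnorm (lam k))) =
           \<bar>1 - cmod (poly (PP q) (of_real (r k)) / poly (PP p) (of_real (r k)))\<bar> / (1 - r k)"
      using r1[of k] by (simp add: mx)
    also have "\<dots> \<le> C" using e2 r1[of k] by (simp add: divide_simps)
    finally show ?thesis by simp
  qed
  show ?thesis
  proof (intro exI[of _ lam] conjI allI inb llim)
    show "bounded (range (\<lambda>k. (1 - cmod (\<phi> (lam k))) / (1 - maxnorm (lam k))))"
      unfolding bounded_iff by (rule exI[of _ "\<bar>C\<bar>"]) (use bnd in auto)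
  qed
qed

end
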